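(* Let $p\ge q$ and $n\ge 1$ be positive integers and let $B$ be a $p\times q$ matrix such that $B^T$ has full row rank. Let $C$ be the $(nq+p)\times(nq+p)$ block matrix $$C=\begin{bmatrix} 0 & B & B & \cdots & B\\ B^T & 0 & I & \cdots & I\\ B^T & I & 0 & \cdots & I\\ \vdots & \vdots & \vdots & \ddots & \vdots\\ B^T & I & I & \cdots & 0\end{bmatrix}$$ (one block of size $p$ followed by $n$ blocks of size $q$), and let $D$ be the $(np+q)\times(np+q)$ block matrix $$D=\begin{bmatrix} 0 & B^T & B^T & \cdots & B^T\\ B & 0 & I & \cdots & I\\ B & I & 0 & \cdots & I\\ \vdots & \vdots & \vdots & \ddots & \vdots\\ B & I & I & \cdots & 0\end{bmatrix}$$ (one block of size $q$ followed by $n$ blocks of size $p$). Then $C$ has $0$ as an eigenvalue with multiplicity at least $p-q$, and $D$ has $n-1$ as an eigenvalue with multiplicity at least $p-q$.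
   Context: $I$ denotes an identity matrix and $0$ a zero matrix of appropriate size. *)

theory Defs
  imports "Jordan_Normal_Form.DL_Rank" "Jordan_Normal_Form.Char_Poly"
begin

text \<open>Block matrix with one leading block of size m (zero block), followed by n blocks
  of size k.
  C = blockC p q n B   (M = B, p x q);   D = blockC q p n (B^T)  (M = B^T, q x p).\<close>

definition blockC :: "nat \<Rightarrow> nat \<Rightarrow> nat \<Rightarrow> real mat \<Rightarrow> real mat" where
  "blockC m k n M = mat (n * k + m) (n * k + m) (\<lambda>(i, j).
     if i < m \<and> j < m then 0
     else if i < m then M $$ (i, (j - m) mod k)
     else if j < m then (transpose_mat M) $$ ((i - m) mod k, j)
     else if (i - m) div k = (j - m) div k then 0
     else if (i - m) mod k = (j - m) mod k then 1 else 0)"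

end

theory Submission
  imports Defs
begin


lemma eig_dvd_char_poly:
  fixes A P :: "real mat" and S :: "nat set"
  assumes A: "A \<in> carrier_mat N N" and P: "P \<in> carrier_mat N N"
    and inj: "\<And>x. x \<in> carrier_vec N \<Longrightarrow> P *\<^sub>v x = 0\<^sub>v N \<Longrightarrow> x = 0\<^sub>v N"
    and SN: "S \<subseteq> {..<N}"
    and eig: "\<And>i j. i < N \<Longrightarrow> j \<in> S \<Longrightarrow> (A * P) $$ (i, j) = l * P $$ (i, j)"
  shows "card S \<le> order l (char_poly A)"
proof -
  interpret cp: comm_ring_hom "\<lambda>a::real. [:a:]"
    by unfold_locales (auto simp: one_pCons)
  have detP: "det P \<noteq> 0"
    using det_0_iff_vec_prod_zero_field[OF P] inj by auto
  define X where "X = char_poly_matrix A"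
  have X: "X \<in> carrier_mat N N" unfolding X_def using A by simp
  define Pp where "Pp = map_mat (\<lambda>a. [:a:]) P"
  have Pp: "Pp \<in> carrier_mat N N" unfolding Pp_def using P by simp
  define Q where "Q = mat N N (\<lambda>(i,j). if j \<in> S then [:P $$ (i,j):] else (X * Pp) $$ (i,j))"
  define Dg where "Dg = mat N N (\<lambda>(i,j). if i = j then (if j \<in> S then [:-l,1:] else 1) else (0::real poly))"
  have Q: "Q \<in> carrier_mat N N" and Dg: "Dg \<in> carrier_mat N N" unfolding Q_def Dg_def by auto
  have XP: "(X * Pp) $$ (i,j) = [:0,1:] * [:P $$ (i,j):] - [:(A * P) $$ (i,j):]" if "i < N" "j < N" for i j
  proof -
    have "(X * Pp) $$ (i,j) = (\<Sum>k<N. ((if i = k then [:0,1:] else 0) + [:- A $$ (i,k):]) * [:P $$ (k,j):])"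
      using that A P X Pp unfolding X_def Pp_def char_poly_matrix_def
      by (auto simp: scalar_prod_def lessThan_atLeast0 intro!: sum.cong)
    also have "\<dots> = (\<Sum>k<N. (if i = k then [:0,1:] * [:P $$ (k,j):] else 0)) - (\<Sum>k<N. [:A $$ (i,k) * P $$ (k,j):])"
      unfolding sum_subtractf[symmetric]
      by (rule sum.cong, simp, simp add: distrib_right)
    also have "\<dots> = [:0,1:] * [:P $$ (i,j):] - [:(A * P) $$ (i,j):]"
      using that A P by (simp add: cp.hom_sum[symmetric] scalar_prod_def lessThan_atLeast0)
    finally show ?thesis .
  qed
  have eq: "X * Pp = Q * Dg"
  proof (rule eq_matI)
    fix i j assume i: "i < dim_row (Q * Dg)" and j: "j < dim_col (Q * Dg)"
    hence i: "i < N" and j: "j < N" using Q Dg by auto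
    have "(Q * Dg) $$ (i,j) = (\<Sum>k<N. Q $$ (i,k) * (if k = j then Dg $$ (j,j) else 0))"
      using i j Q Dg by (auto simp: scalar_prod_def lessThan_atLeast0 Dg_def intro!: sum.cong)
    also have "\<dots> = Q $$ (i,j) * Dg $$ (j,j)"
      using j by (simp add: if_distrib cong: if_cong)
    also have "\<dots> = (X * Pp) $$ (i,j)"
    proof (cases "j \<in> S")
      case True
      show ?thesis using True i j unfolding XP[OF i j] eig[OF i True] Q_def Dg_def
        by (simp add: algebra_simps)
    next
      case False
      thus ?thesis using i j unfolding Q_def Dg_def by simp
    qed
    finally show "(X * Pp) $$ (i,j) = (Q * Dg) $$ (i,j)" ..
  qed (insert X Pp Q Dg, auto)
  have "det (X * Pp) = char_poly A * [:det P:]"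
    using det_mult[OF X Pp] unfolding X_def char_poly_def Pp_def by simp
  moreover have "det (Q * Dg) = det Q * [:-l,1:] ^ card S"
  proof -
    have ut: "upper_triangular Dg" unfolding Dg_def by (auto simp: upper_triangular_def)
    have "det Dg = (\<Prod>j\<in>{0..<N}. if j \<in> S then [:-l,1:] else 1)"
      using det_upper_triangular[OF ut Dg] by (simp add: prod_list_diag_prod Dg_def)
    also have "\<dots> = [:-l,1:] ^ card S"
      using SN by (simp add: prod.If_cases Int_absorb1 lessThan_atLeast0)
    finally show ?thesis using det_mult[OF Q Dg] by simp
  qed
  ultimately have "char_poly A * [:det P:] = det Q * [:-l,1:] ^ card S" using eq by simp
  hence d: "[:-l,1:] ^ card S dvd char_poly A * [:det P:]" by (metis dvd_triv_right)
  have "char_poly A = (char_poly A * [:det P:]) * [:1 / det P:]"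
    using detP by (simp add: mult.assoc)
  hence "[:-l,1:] ^ card S dvd char_poly A" using d by (metis dvd_mult2)
  moreover have "char_poly A \<noteq> 0"
    using degree_monic_char_poly[OF A] by auto
  ultimately show ?thesis using order_divides by blast
qed



lemma kernel_vectors:
  fixes B :: "real mat"
  assumes B: "B \<in> carrier_mat p q" and rk: "vec_space.rank q (transpose_mat B) = q"
  obtains K v where "K \<subseteq> {..<p}" "card K = p - q"
    "\<And>k. k \<in> K \<Longrightarrow> v k \<in> carrier_vec p"
    "\<And>k. k \<in> K \<Longrightarrow> transpose_mat B *\<^sub>v v k = 0\<^sub>v q"
    "\<And>k k'. k \<in> K \<Longrightarrow> k' \<in> K \<Longrightarrow> v k $ k' = (if k' = k then 1 else 0)"
proof -
  interpret V: vec_space "TYPE(real)" q .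
  define BT where "BT = transpose_mat B"
  have BT: "BT \<in> carrier_mat q p" using B unfolding BT_def by simp
  have colsC: "set (cols BT) \<subseteq> carrier_vec q" using BT cols_dim by blast
  obtain S where Smax: "maximal S (\<lambda>T. T \<subseteq> set (cols BT) \<and> V.lin_indpt T)"
    using maximal_exists[of "(\<lambda>T. T \<subseteq> set (cols BT) \<and> V.lin_indpt T)" "card (set (cols BT))" "{}"]
    by (meson List.finite_set card_mono empty_iff empty_subsetI V.finite_lin_indpt2 rev_finite_subset)
  have cardS: "card S = q"
    using V.rank_card_indpt[OF BT Smax] rk unfolding BT_def by simp
  have Ssub: "S \<subseteq> set (cols BT)" and Sind: "V.lin_indpt S"
    using Smax unfolding maximal_def by auto
  have finS: "finite S" using Ssub finite_subset by blast
  have SC: "S \<subseteq> carrier_vec q" using Ssub colsC by blast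
  have ex_idx: "\<exists>j. j < p \<and> col BT j = s" if "s \<in> S" for s
    using that Ssub BT unfolding cols_def by force
  define idx where "idx s = (SOME j. j < p \<and> col BT j = s)" for s
  have idx: "idx s < p" "col BT (idx s) = s" if "s \<in> S" for s
    using someI_ex[OF ex_idx[OF that]] unfolding idx_def by auto
  have inj: "inj_on idx S" by (metis idx(2) inj_onI)
  define J where "J = idx ` S"
  have Jsub: "J \<subseteq> {..<p}" using idx unfolding J_def by auto
  have cardJ: "card J = q" using card_image[OF inj] cardS unfolding J_def by simp
  define K where "K = {..<p} - J"
  have Ksub: "K \<subseteq> {..<p}" unfolding K_def by auto
  have cardK: "card K = p - q" unfolding K_def using Jsub cardJ
    by (simp add: card_Diff_subset finite_subset)
  have inspan: "col BT k \<in> V.span S" if k: "k < p" for k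
  proof (rule ccontr)
    assume ns: "col BT k \<notin> V.span S"
    have cin: "col BT k \<in> set (cols BT)" using k BT by (auto simp: cols_def)
    have cC: "col BT k \<in> carrier_vec q" using cin colsC by auto
    have nS: "col BT k \<notin> S" using ns V.in_own_span[OF SC] by auto
    have "V.lin_indpt (S \<union> {col BT k})"
      using V.lin_dep_iff_in_span[OF SC Sind _ nS] cC ns by auto
    hence "S \<union> {col BT k} = S" using Smax cin Ssub unfolding maximal_def by blast
    thus False using nS by auto
  qed
  have "\<exists>a. V.lincomb a S = col BT k" if "k < p" for k
    using V.finite_in_span[OF finS SC inspan[OF that]] by auto
  then obtain a where a: "\<And>k. k < p \<Longrightarrow> V.lincomb (a k) S = col BT k" by metis
  define v where "v k = vec p (\<lambda>i. (if i = k then 1 else 0) + (if i \<in> J then - a k (col BT i) else 0))" for k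
  show ?thesis
  proof (rule that[of K v])
    show "K \<subseteq> {..<p}" "card K = p - q" by fact+
    show "v k \<in> carrier_vec p" for k unfolding v_def by simp
    show "v k $ k' = (if k' = k then 1 else 0)" if "k \<in> K" "k' \<in> K" for k k'
      using that unfolding v_def K_def by auto
    show "transpose_mat B *\<^sub>v v k = 0\<^sub>v q" if kK: "k \<in> K" for k
    proof (rule eq_vecI)
      fix r assume "r < dim_vec (0\<^sub>v q :: real vec)"
      hence r: "r < q" by simp
      have kp: "k < p" and kJ: "k \<notin> J" using kK unfolding K_def by auto
      have "(BT *\<^sub>v v k) $ r = (\<Sum>i<p. BT $$ (r,i) * ((if i = k then 1 else 0) + (if i \<in> J then - a k (col BT i) else 0)))"
        using BT r unfolding v_def by (auto simp: scalar_prod_def lessThan_atLeast0 intro!: sum.cong)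
      also have "\<dots> = (\<Sum>i<p. if i = k then BT $$ (r,i) else 0) - (\<Sum>i<p. if i \<in> J then a k (col BT i) * BT $$ (r,i) else 0)"
        unfolding sum_subtractf[symmetric] by (rule sum.cong, auto simp: algebra_simps)
      also have "\<dots> = BT $$ (r,k) - (\<Sum>i\<in>J. a k (col BT i) * BT $$ (r,i))"
        using kp Jsub by (simp add: sum.If_cases Int_absorb1)
      also have "(\<Sum>i\<in>J. a k (col BT i) * BT $$ (r,i)) = (\<Sum>s\<in>S. a k s * s $ r)"
        unfolding J_def sum.reindex[OF inj] comp_def proof (intro sum.cong refl)
        fix s assume s: "s \<in> S"
        have "BT $$ (r, idx s) = col BT (idx s) $ r" using BT r idx(1)[OF s] by simp
        thus "a k (col BT (idx s)) * BT $$ (r, idx s) = a k s * s $ r" using idx(2)[OF s] by simp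
      qed
      also have "\<dots> = V.lincomb (a k) S $ r" using V.lincomb_index[OF r SC] by simp
      also have "\<dots> = BT $$ (r,k)" using a[OF kp] r kp BT by simp
      finally show "(transpose_mat B *\<^sub>v v k) $ r = 0\<^sub>v q $ r" using r unfolding BT_def by simp
    qed (insert B, simp)
  qed
qed



lemma blockC_carrier: "blockC m k n M \<in> carrier_mat (n * k + m) (n * k + m)"
  unfolding blockC_def by simp

lemma blockC_index: "i < n * k + m \<Longrightarrow> j < n * k + m \<Longrightarrow> blockC m k n M $$ (i, j) =
    (if i < m \<and> j < m then 0
     else if i < m then M $$ (i, (j - m) mod k)
     else if j < m then (transpose_mat M) $$ ((i - m) mod k, j)
     else if (i - m) div k = (j - m) div k then 0
     else if (i - m) mod k = (j - m) mod k then 1 else 0)"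
  unfolding blockC_def by simp

lemma sum_lt_restrict: "(p::nat) \<le> N \<Longrightarrow> (\<Sum>t<N. if t < p then f t else (0::'a::comm_monoid_add)) = (\<Sum>t<p. f t)"
proof -
  assume "p \<le> N"
  hence "{..<N} \<inter> {t. t < p} = {..<p}" by (auto simp: less_le_trans)
  thus ?thesis by (simp add: sum.If_cases)
qed

lemma partC:
  fixes B :: "real mat"
  assumes B: "B \<in> carrier_mat p q" and q: "q \<ge> 1"
    and K: "K \<subseteq> {..<p}"
    and vC: "\<And>k. k \<in> K \<Longrightarrow> v k \<in> carrier_vec p"
    and vker: "\<And>k. k \<in> K \<Longrightarrow> transpose_mat B *\<^sub>v v k = 0\<^sub>v q"
    and vd: "\<And>k k'. k \<in> K \<Longrightarrow> k' \<in> K \<Longrightarrow> v k $ k' = (if k' = k then 1 else 0)"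
  shows "card K \<le> order 0 (char_poly (blockC p q n B))"
proof -
  define N where "N = n * q + p"
  define P where "P = mat N N (\<lambda>(i,j). if j \<in> K then (if i < p then v j $ i else 0) else (if i = j then 1 else (0::real)))"
  have P: "P \<in> carrier_mat N N" unfolding P_def by simp
  have pN: "p \<le> N" unfolding N_def by simp
  show ?thesis
  proof (rule eig_dvd_char_poly[OF _ P])
    show "blockC p q n B \<in> carrier_mat N N" unfolding N_def by (rule blockC_carrier)
    show "K \<subseteq> {..<N}" using K pN by auto
    show "x = 0\<^sub>v N" if x: "x \<in> carrier_vec N" and Px: "P *\<^sub>v x = 0\<^sub>v N" for x
    proof -
      have row: "(\<Sum>j<N. P $$ (i,j) * x $ j) = 0" if "i < N" for i
      proof -
        have "(P *\<^sub>v x) $ i = 0" using Px that by simp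
        thus ?thesis using P x that by (simp add: scalar_prod_def lessThan_atLeast0)
      qed
      have xK: "x $ i = 0" if i: "i \<in> K" for i
      proof -
        have iN: "i < N" using i K pN by auto
        have "(\<Sum>j<N. P $$ (i,j) * x $ j) = (\<Sum>j<N. if j = i then x $ j else 0)"
          using i iN K vd unfolding P_def by (intro sum.cong refl, auto)
        thus ?thesis using row[OF iN] iN by simp
      qed
      show ?thesis
      proof (rule eq_vecI)
        fix i assume "i < dim_vec (0\<^sub>v N :: real vec)"
        hence i: "i < N" by simp
        have "(\<Sum>j<N. P $$ (i,j) * x $ j) = (\<Sum>j<N. if j = i then x $ j else 0)"
          using i xK unfolding P_def by (intro sum.cong refl, auto)
        thus "x $ i = 0\<^sub>v N $ i" using row[OF i] i by simp
      qed (insert x, simp)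
    qed
    show "(blockC p q n B * P) $$ (i, j) = 0 * P $$ (i, j)" if i: "i < N" and j: "j \<in> K" for i j
    proof -
      have jN: "j < N" using j K pN by auto
      have "(blockC p q n B * P) $$ (i, j) = (\<Sum>t<N. blockC p q n B $$ (i,t) * P $$ (t,j))"
        using i jN P blockC_carrier[of p q n B] unfolding N_def
        by (simp add: scalar_prod_def lessThan_atLeast0)
      also have "\<dots> = (\<Sum>t<N. if t < p then blockC p q n B $$ (i,t) * v j $ t else 0)"
        using jN j unfolding P_def by (intro sum.cong refl, auto)
      also have "\<dots> = (\<Sum>t<p. blockC p q n B $$ (i,t) * v j $ t)"
        by (rule sum_lt_restrict[OF pN])
      also have "\<dots> = 0"
      proof (cases "i < p")
        case True
        thus ?thesis using i pN by (simp add: blockC_index N_def)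
      next
        case False
        define r where "r = (i - p) mod q"
        have r: "r < q" unfolding r_def using q by simp
        have "(\<Sum>t<p. blockC p q n B $$ (i,t) * v j $ t) = (\<Sum>t<p. transpose_mat B $$ (r,t) * v j $ t)"
          using False i pN unfolding r_def by (intro sum.cong refl, auto simp: blockC_index N_def)
        also have "\<dots> = (transpose_mat B *\<^sub>v v j) $ r"
          using B r vC[OF j] by (simp add: scalar_prod_def lessThan_atLeast0)
        also have "\<dots> = 0" using vker[OF j] r by simp
        finally show ?thesis .
      qed
      finally show ?thesis by simp
    qed
  qed
qed



lemma sum_mod_blocks:
  fixes h :: "nat \<Rightarrow> real"
  shows "(\<Sum>s<n*p. h (s mod p)) = real n * (\<Sum>r<p. h r)"
proof -
  have inner: "(\<Sum>s\<in>{m*p..<m*p+p}. h (s mod p)) = (\<Sum>r<p. h r)" for m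
  proof -
    have "(\<Sum>s\<in>{m*p..<m*p+p}. h (s mod p)) = (\<Sum>s\<in>{0+m*p..<p+m*p}. h (s mod p))"
      by (simp add: add.commute)
    also have "\<dots> = (\<Sum>i\<in>{0..<p}. h ((i + m*p) mod p))" by (rule sum.shift_bounds_nat_ivl)
    also have "\<dots> = (\<Sum>r<p. h r)" by (simp add: lessThan_atLeast0)
    finally show ?thesis .
  qed
  have "(\<Sum>s<n*p. h (s mod p)) = (\<Sum>m<n. \<Sum>s\<in>{m*p..<m*p+p}. h (s mod p))"
    by (rule sum.nat_group[symmetric])
  also have "\<dots> = real n * (\<Sum>r<p. h r)" by (simp add: inner)
  finally show ?thesis .
qed

lemma sum_shift_q: "(\<Sum>t<(M::nat)+q. if q \<le> t then g t else (0::real)) = (\<Sum>s<M. g (s + q))"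
proof -
  have "{..<M+q} \<inter> {t. q \<le> t} = {0+q..<M+q}" by auto
  hence "(\<Sum>t<M+q. if q \<le> t then g t else (0::real)) = (\<Sum>t\<in>{0+q..<M+q}. g t)"
    by (simp add: sum.If_cases)
  also have "\<dots> = (\<Sum>s\<in>{0..<M}. g (s + q))" by (rule sum.shift_bounds_nat_ivl)
  finally show ?thesis by (simp add: lessThan_atLeast0)
qed

lemma partD:
  fixes B :: "real mat"
  assumes B: "B \<in> carrier_mat p q" and q: "q \<ge> 1" and pq: "p \<ge> q" and n: "n \<ge> 1"
    and K: "K \<subseteq> {..<p}"
    and vC: "\<And>k. k \<in> K \<Longrightarrow> v k \<in> carrier_vec p"
    and vker: "\<And>k. k \<in> K \<Longrightarrow> transpose_mat B *\<^sub>v v k = 0\<^sub>v q"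
    and vd: "\<And>k k'. k \<in> K \<Longrightarrow> k' \<in> K \<Longrightarrow> v k $ k' = (if k' = k then 1 else 0)"
  shows "card K \<le> order (real n - 1) (char_poly (blockC q p n (transpose_mat B)))"
proof -
  define BT where "BT = transpose_mat B"
  have BT: "BT \<in> carrier_mat q p" using B unfolding BT_def by simp
  define N where "N = n * p + q"
  define E where "E j = (q \<le> j \<and> j - q \<in> K)" for j
  define P where "P = mat N N (\<lambda>(i,j). if E j then (if q \<le> i then v (j - q) $ ((i - q) mod p) else 0) else (if i = j then 1 else (0::real)))"
  have P: "P \<in> carrier_mat N N" unfolding P_def by simp
  have pN: "p + q \<le> N" unfolding N_def using n by (cases n, auto)
  have p0: "p > 0" using q pq by simp
  define S where "S = (\<lambda>k. k + q) ` K"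
  have cardS: "card S = card K" unfolding S_def by (rule card_image, auto simp: inj_on_def)
  have ES: "E j" if "j \<in> S" for j using that unfolding S_def E_def by auto
  have SN: "S \<subseteq> {..<N}" using K pN unfolding S_def by auto
  have "card S \<le> order (real n - 1) (char_poly (blockC q p n BT))"
  proof (rule eig_dvd_char_poly[OF _ P])
    show "blockC q p n BT \<in> carrier_mat N N" unfolding N_def by (rule blockC_carrier)
    show "S \<subseteq> {..<N}" by fact
    show "x = 0\<^sub>v N" if x: "x \<in> carrier_vec N" and Px: "P *\<^sub>v x = 0\<^sub>v N" for x
    proof -
      have row: "(\<Sum>j<N. P $$ (i,j) * x $ j) = 0" if "i < N" for i
      proof -
        have "(P *\<^sub>v x) $ i = 0" using Px that by simp
        thus ?thesis using P x that by (simp add: scalar_prod_def lessThan_atLeast0)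
      qed
      have xK: "x $ i = 0" if i: "E i" for i
      proof -
        have iN: "i < N" using i K pN unfolding E_def by force
        have ip: "i - q < p" using i K unfolding E_def by auto
        have "(\<Sum>j<N. P $$ (i,j) * x $ j) = (\<Sum>j<N. if j = i then x $ j else 0)"
        proof (intro sum.cong refl)
          fix j assume "j \<in> {..<N}"
          hence j: "j < N" by simp
          show "P $$ (i,j) * x $ j = (if j = i then x $ j else 0)"
          proof (cases "E j")
            case True
            have "v (j - q) $ ((i - q) mod p) = (if i = j then 1 else 0)"
              using True i ip vd[of "j - q" "i - q"] unfolding E_def by auto
            thus ?thesis using True i j iN unfolding P_def E_def by auto
          next
            case False
            thus ?thesis using i j iN unfolding P_def by auto
          qed
        qed
        thus ?thesis using row[OF iN] iN by simp
      qed
      show ?thesis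
      proof (rule eq_vecI)
        fix i assume "i < dim_vec (0\<^sub>v N :: real vec)"
        hence i: "i < N" by simp
        have "(\<Sum>j<N. P $$ (i,j) * x $ j) = (\<Sum>j<N. if j = i then x $ j else 0)"
          using i xK unfolding P_def by (intro sum.cong refl, auto)
        thus "x $ i = 0\<^sub>v N $ i" using row[OF i] i by simp
      qed (insert x, simp)
    qed
    show "(blockC q p n BT * P) $$ (i, j) = (real n - 1) * P $$ (i, j)" if i: "i < N" and j: "j \<in> S" for i j
    proof -
      obtain k where k: "k \<in> K" and jk: "j = k + q" using j unfolding S_def by auto
      have kp: "k < p" using k K by auto
      have jN: "j < N" using j SN by auto
      let ?D = "blockC q p n BT"
      have Pcol: "P $$ (t, j) = (if q \<le> t then v k $ ((t - q) mod p) else 0)" if "t < N" for t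
        using that jN k jk unfolding P_def E_def by auto
      have "(?D * P) $$ (i, j) = (\<Sum>t<N. ?D $$ (i,t) * P $$ (t,j))"
        using i jN P blockC_carrier[of q p n BT] unfolding N_def
        by (simp add: scalar_prod_def lessThan_atLeast0)
      also have "\<dots> = (\<Sum>t<n*p+q. if q \<le> t then ?D $$ (i,t) * v k $ ((t - q) mod p) else 0)"
        unfolding N_def using Pcol unfolding N_def by (intro sum.cong refl, auto)
      also have "\<dots> = (\<Sum>s<n*p. ?D $$ (i,s+q) * v k $ (s mod p))"
        by (subst sum_shift_q, simp)
      also have "\<dots> = (real n - 1) * P $$ (i, j)"
      proof (cases "i < q")
        case True
        have "(\<Sum>s<n*p. ?D $$ (i,s+q) * v k $ (s mod p)) = (\<Sum>s<n*p. (\<lambda>r. BT $$ (i, r) * v k $ r) (s mod p))"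
          using True by (intro sum.cong refl, auto simp: blockC_index)
        also have "\<dots> = real n * (\<Sum>r<p. BT $$ (i, r) * v k $ r)" by (rule sum_mod_blocks)
        also have "(\<Sum>r<p. BT $$ (i, r) * v k $ r) = (BT *\<^sub>v v k) $ i"
          using BT True vC[OF k] by (simp add: scalar_prod_def lessThan_atLeast0)
        also have "\<dots> = 0" using vker[OF k] True unfolding BT_def by simp
        finally show ?thesis using Pcol[OF i] True by simp
      next
        case False
        define a where "a = i - q"
        have a: "a < n * p" using i False unfolding a_def N_def by auto
        define c where "c = v k $ (a mod p)"
        have "(\<Sum>s<n*p. ?D $$ (i,s+q) * v k $ (s mod p)) =
              (\<Sum>s<n*p. (\<lambda>r. if r = a mod p then c else 0) (s mod p)) - (\<Sum>s<n*p. if s = a then c else 0)"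
          unfolding sum_subtractf[symmetric]
        proof (intro sum.cong refl)
          fix s assume "s \<in> {..<n*p}"
          hence s: "s < n * p" by simp
          have Dv: "?D $$ (i,s+q) = (if a div p = s div p then 0 else if a mod p = s mod p then 1 else 0)"
            using False s i unfolding a_def N_def by (simp add: blockC_index)
          show "?D $$ (i,s+q) * v k $ (s mod p) =
              (\<lambda>r. if r = a mod p then c else 0) (s mod p) - (if s = a then c else 0)"
          proof (cases "s = a")
            case True thus ?thesis using Dv by simp
          next
            case sa: False
            show ?thesis
            proof (cases "a div p = s div p")
              case True
              hence "a mod p \<noteq> s mod p" using sa by (metis div_mult_mod_eq)
              thus ?thesis using Dv True sa by auto
            next
              case False
              thus ?thesis using Dv sa unfolding c_def by auto
            qed
          qed
        qed
        also have "\<dots> = real n * (\<Sum>r<p. if r = a mod p then c else 0) - c"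
          using sum_mod_blocks[where h="\<lambda>r. if r = a mod p then c else 0" and n=n and p=p] a by simp
        also have "\<dots> = real n * c - c"
          using p0 by simp
        also have "\<dots> = (real n - 1) * P $$ (i, j)"
          using Pcol[OF i] False unfolding c_def a_def by (simp add: algebra_simps)
        finally show ?thesis .
      qed
      finally show ?thesis .
    qed
  qed
  thus ?thesis using cardS unfolding BT_def by simp
qed


theorem lemma3p14:
  fixes p q n :: nat and B :: "real mat"
  assumes "q \<ge> 1" and "p \<ge> q" and "n \<ge> 1"
    and "B \<in> carrier_mat p q"
    and "vec_space.rank q (transpose_mat B) = q"
  shows "order 0 (char_poly (blockC p q n B)) \<ge> p - q \<and>
         order (real n - 1) (char_poly (blockC q p n (transpose_mat B))) \<ge> p - q"
proof -
  obtain K v where K: "K \<subseteq> {..<p}" "card K = p - q"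
    "\<And>k. k \<in> K \<Longrightarrow> v k \<in> carrier_vec p"
    "\<And>k. k \<in> K \<Longrightarrow> transpose_mat B *\<^sub>v v k = 0\<^sub>v q"
    "\<And>k k'. k \<in> K \<Longrightarrow> k' \<in> K \<Longrightarrow> v k $ k' = (if k' = k then 1 else 0)"
    using kernel_vectors[OF assms(4,5)] by metis
  show ?thesis
    using partC[OF assms(4,1) K(1,3,4,5), of n] partD[OF assms(4,1,2,3) K(1,3,4,5)] K(2) by simp
qed

end
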